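(* Let $k=3$ and $\alpha=(\tfrac13,\tfrac25,\tfrac27)$. Then every $\alpha$-communal triple can be written as the sum of one of $[0,0,0],[6,7,5],[8,10,7],[9,11,8]$ and a nonnegative integer linear combination of $[5,6,4],[7,8,6],[11,14,10]$. The number $f(g)$ of $\alpha$-communal triples with entries summing to $g$ has generating function \[ \sum_{g\ge0}f(g)x^g=\frac{1+x^{18}+x^{25}+x^{28}}{(1-x^{15})(1-x^{21})(1-x^{35})}. \] In particular $f(100)=3$, the triples being $[32,40,28]$, $[33,39,28]$, $[33,40,27]$, and $f(101)=1$, the unique triple being $[33,40,28]$.
   Context: A triple $[g_1,g_2,g_3]$ of integers is $\alpha$-communal if $0\le g_i\le\alpha_i(g_1+g_2+g_3)$ for $i=1,2,3$. *)

theory Defs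
  imports "HOL-Computational_Algebra.Formal_Power_Series"
begin

type_synonym triple = "int \<times> int \<times> int"

definition communal :: "rat \<times> rat \<times> rat \<Rightarrow> triple \<Rightarrow> bool" where
  "communal \<alpha> g \<longleftrightarrow>
     (case \<alpha> of (a1, a2, a3) \<Rightarrow> case g of (g1, g2, g3) \<Rightarrow>
        0 \<le> g1 \<and> of_int g1 \<le> a1 * of_int (g1 + g2 + g3) \<and>
        0 \<le> g2 \<and> of_int g2 \<le> a2 * of_int (g1 + g2 + g3) \<and>
        0 \<le> g3 \<and> of_int g3 \<le> a3 * of_int (g1 + g2 + g3))"

definition tsum :: "triple \<Rightarrow> int" where
  "tsum g = (case g of (g1, g2, g3) \<Rightarrow> g1 + g2 + g3)"

definition tadd :: "triple \<Rightarrow> triple \<Rightarrow> triple" where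
  "tadd a b = (case a of (a1, a2, a3) \<Rightarrow> case b of (b1, b2, b3) \<Rightarrow> (a1 + b1, a2 + b2, a3 + b3))"

definition tscale :: "nat \<Rightarrow> triple \<Rightarrow> triple" where
  "tscale n a = (case a of (a1, a2, a3) \<Rightarrow> (int n * a1, int n * a2, int n * a3))"

definition communal_set :: "rat \<times> rat \<times> rat \<Rightarrow> nat \<Rightarrow> triple set" where
  "communal_set \<alpha> g = {t. communal \<alpha> t \<and> tsum t = int g}"

definition fcount :: "rat \<times> rat \<times> rat \<Rightarrow> nat \<Rightarrow> nat" where
  "fcount \<alpha> g = card (communal_set \<alpha> g)"

end

theory Submission
  imports Defs
begin

definition comm :: "triple \<Rightarrow> bool" where
  "comm t = (case t of (a,b,c) \<Rightarrow> 3*a \<le> a+b+c \<and> 5*b \<le> 2*(a+b+c) \<and> 7*c \<le> 2*(a+b+c))"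
definition sl1 :: "triple \<Rightarrow> int" where "sl1 t = (case t of (a,b,c) \<Rightarrow> (a+b+c) - 3*a)"
definition sl2 :: "triple \<Rightarrow> int" where "sl2 t = (case t of (a,b,c) \<Rightarrow> 2*(a+b+c) - 5*b)"
definition sl3 :: "triple \<Rightarrow> int" where "sl3 t = (case t of (a,b,c) \<Rightarrow> 2*(a+b+c) - 7*c)"

lemma rat_aux1: "(of_int x \<le> (1/3::rat) * of_int y) \<longleftrightarrow> 3*x \<le> y"
proof -
  have "(of_int x \<le> (1/3::rat) * of_int y) \<longleftrightarrow> (of_int (3*x) \<le> (of_int y::rat))" by simp linarith
  then show ?thesis by (simp only: of_int_le_iff)
qed
lemma rat_aux2: "(of_int x \<le> (2/5::rat) * of_int y) \<longleftrightarrow> 5*x \<le> 2*y"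
proof -
  have "(of_int x \<le> (2/5::rat) * of_int y) \<longleftrightarrow> (of_int (5*x) \<le> (of_int (2*y)::rat))" by simp linarith
  then show ?thesis by (simp only: of_int_le_iff)
qed
lemma rat_aux3: "(of_int x \<le> (2/7::rat) * of_int y) \<longleftrightarrow> 7*x \<le> 2*y"
proof -
  have "(of_int x \<le> (2/7::rat) * of_int y) \<longleftrightarrow> (of_int (7*x) \<le> (of_int (2*y)::rat))" by simp linarith
  then show ?thesis by (simp only: of_int_le_iff)
qed

lemma comm_nonneg: "comm (a,b,c) \<Longrightarrow> 0 \<le> a \<and> 0 \<le> b \<and> 0 \<le> c"
  unfolding comm_def by auto

lemma communal_iff: "communal (1/3,2/5,2/7) t \<longleftrightarrow> comm t"
proof -
  obtain a b c where t: "t = (a,b,c)" by (cases t)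
  have e: "communal (1/3,2/5,2/7) (a,b,c) \<longleftrightarrow> (0 \<le> a \<and> 0 \<le> b \<and> 0 \<le> c \<and> comm (a,b,c))"
    unfolding communal_def comm_def by (simp only: rat_aux1 rat_aux2 rat_aux3 prod.case) blast
  show ?thesis unfolding t e using comm_nonneg[of a b c] by blast
qed

definition A0 :: "int \<Rightarrow> triple set" where "A0 g = {t. comm t \<and> tsum t = g}"
definition A1 :: "int \<Rightarrow> triple set" where "A1 g = {t \<in> A0 g. sl3 t \<le> 1}"
definition A2 :: "int \<Rightarrow> triple set" where "A2 g = {t \<in> A1 g. sl2 t \<le> 1}"
definition A3 :: "int \<Rightarrow> triple set" where "A3 g = {t \<in> A2 g. sl1 t \<le> 1}"

lemma A0_bound: "t \<in> A0 g \<Longrightarrow> t \<in> {0..g} \<times> {0..g} \<times> {0..g}"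
proof -
  assume h: "t \<in> A0 g"
  obtain a b c where t: "t = (a,b,c)" by (cases t)
  have "comm (a,b,c)" "a+b+c = g" using h by (auto simp: t A0_def tsum_def)
  with comm_nonneg[of a b c] show ?thesis by (simp add: t)
qed

lemma finA0: "finite (A0 g)"
proof -
  have "A0 g \<subseteq> {0..g} \<times> {0..g} \<times> {0..g}" using A0_bound by blast
  then show ?thesis by (rule finite_subset) auto
qed

lemma A0_neg: "g < 0 \<Longrightarrow> A0 g = {}"
  using A0_bound by fastforce

lemma inj_tr: "inj (\<lambda>t. tadd t v)"
  by (auto simp: inj_def tadd_def split: prod.splits)

lemma shift1: "{t \<in> A0 g. \<not> sl3 t \<le> 1} = (\<lambda>t. tadd t (5,6,4)) ` A0 (g-15)"
proof (intro set_eqI iffI)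
  fix t assume h: "t \<in> {t \<in> A0 g. \<not> sl3 t \<le> 1}"
  obtain a b c where t: "t = (a,b,c)" by (cases t)
  show "t \<in> (\<lambda>t. tadd t (5,6,4)) ` A0 (g-15)"
    apply (rule image_eqI[of _ _ "(a-5,b-6,c-4)"])
    using h by (auto simp: t tadd_def A0_def comm_def tsum_def sl3_def)
next
  fix t assume "t \<in> (\<lambda>t. tadd t (5,6,4)) ` A0 (g-15)"
  then obtain u where u: "u \<in> A0 (g-15)" "t = tadd u (5,6,4)" by auto
  obtain a b c where "u = (a,b,c)" by (cases u)
  then show "t \<in> {t \<in> A0 g. \<not> sl3 t \<le> 1}"
    using u by (auto simp: tadd_def A0_def comm_def tsum_def sl3_def)
qed

lemma shift2: "{t \<in> A1 g. \<not> sl2 t \<le> 1} = (\<lambda>t. tadd t (7,8,6)) ` A1 (g-21)"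
proof (intro set_eqI iffI)
  fix t assume h: "t \<in> {t \<in> A1 g. \<not> sl2 t \<le> 1}"
  obtain a b c where t: "t = (a,b,c)" by (cases t)
  show "t \<in> (\<lambda>t. tadd t (7,8,6)) ` A1 (g-21)"
    apply (rule image_eqI[of _ _ "(a-7,b-8,c-6)"])
    using h by (auto simp: t tadd_def A1_def A0_def comm_def tsum_def sl3_def sl2_def)
next
  fix t assume "t \<in> (\<lambda>t. tadd t (7,8,6)) ` A1 (g-21)"
  then obtain u where u: "u \<in> A1 (g-21)" "t = tadd u (7,8,6)" by auto
  obtain a b c where "u = (a,b,c)" by (cases u)
  then show "t \<in> {t \<in> A1 g. \<not> sl2 t \<le> 1}"
    using u by (auto simp: tadd_def A1_def A0_def comm_def tsum_def sl3_def sl2_def)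
qed

lemma shift3: "{t \<in> A2 g. \<not> sl1 t \<le> 1} = (\<lambda>t. tadd t (11,14,10)) ` A2 (g-35)"
proof (intro set_eqI iffI)
  fix t assume h: "t \<in> {t \<in> A2 g. \<not> sl1 t \<le> 1}"
  obtain a b c where t: "t = (a,b,c)" by (cases t)
  show "t \<in> (\<lambda>t. tadd t (11,14,10)) ` A2 (g-35)"
    apply (rule image_eqI[of _ _ "(a-11,b-14,c-10)"])
    using h by (auto simp: t tadd_def A2_def A1_def A0_def comm_def tsum_def sl3_def sl2_def sl1_def)
next
  fix t assume "t \<in> (\<lambda>t. tadd t (11,14,10)) ` A2 (g-35)"
  then obtain u where u: "u \<in> A2 (g-35)" "t = tadd u (11,14,10)" by auto
  obtain a b c where "u = (a,b,c)" by (cases u)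
  then show "t \<in> {t \<in> A2 g. \<not> sl1 t \<le> 1}"
    using u by (auto simp: tadd_def A2_def A1_def A0_def comm_def tsum_def sl3_def sl2_def sl1_def)
qed

lemma card_split: "finite A \<Longrightarrow> card A = card {x\<in>A. P x} + card {x\<in>A. \<not> P x}"
proof -
  assume f: "finite A"
  have "A = {x\<in>A. P x} \<union> {x\<in>A. \<not> P x}" by auto
  moreover have "card ({x\<in>A. P x} \<union> {x\<in>A. \<not> P x}) = card {x\<in>A. P x} + card {x\<in>A. \<not> P x}"
    by (rule card_Un_disjoint) (use f in auto)
  ultimately show ?thesis by simp
qed

lemma card_img: "card ((\<lambda>t. tadd t v) ` A) = card A"
  by (rule card_image) (rule inj_on_subset[OF inj_tr subset_UNIV])

lemma rec1: "card (A0 g) = card (A1 g) + card (A0 (g-15))"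
  using card_split[OF finA0, of g "\<lambda>t. sl3 t \<le> 1"] shift1[of g] card_img
  by (simp add: A1_def)

lemma rec2: "card (A1 g) = card (A2 g) + card (A1 (g-21))"
proof -
  have f: "finite (A1 g)" using finA0 unfolding A1_def by auto
  show ?thesis using card_split[OF f, of "\<lambda>t. sl2 t \<le> 1"] shift2[of g] card_img
    by (simp add: A2_def)
qed

lemma rec3: "card (A2 g) = card (A3 g) + card (A2 (g-35))"
proof -
  have f: "finite (A2 g)" using finA0 unfolding A2_def A1_def by auto
  show ?thesis using card_split[OF f, of "\<lambda>t. sl1 t \<le> 1"] shift3[of g] card_img
    by (simp add: A3_def)
qed

lemma b1: "comm (0,0,0) \<and> sl1 (0,0,0) \<le> 1 \<and> sl2 (0,0,0) \<le> 1 \<and> sl3 (0,0,0) \<le> 1"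
  by (simp add: comm_def sl1_def sl2_def sl3_def)
lemma b2: "comm (6,7,5) \<and> sl1 (6,7,5) \<le> 1 \<and> sl2 (6,7,5) \<le> 1 \<and> sl3 (6,7,5) \<le> 1"
  by (simp add: comm_def sl1_def sl2_def sl3_def)
lemma b3: "comm (8,10,7) \<and> sl1 (8,10,7) \<le> 1 \<and> sl2 (8,10,7) \<le> 1 \<and> sl3 (8,10,7) \<le> 1"
  by (simp add: comm_def sl1_def sl2_def sl3_def)
lemma b4: "comm (9,11,8) \<and> sl1 (9,11,8) \<le> 1 \<and> sl2 (9,11,8) \<le> 1 \<and> sl3 (9,11,8) \<le> 1"
  by (simp add: comm_def sl1_def sl2_def sl3_def)

lemma A3_mem: "t \<in> A3 g \<longleftrightarrow> comm t \<and> tsum t = g \<and> sl3 t \<le> 1 \<and> sl2 t \<le> 1 \<and> sl1 t \<le> 1"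
  by (simp add: A3_def A2_def A1_def A0_def)

lemma A3_char: "A3 g = {t \<in> {(0,0,0), (6,7,5), (8,10,7), (9,11,8)}. tsum t = g}"
proof (intro set_eqI iffI)
  fix t assume h: "t \<in> A3 g"
  obtain a b c where t: "t = (a,b,c)" by (cases t)
  from h have "(a,b,c) \<in> {(0,0,0), (6,7,5), (8,10,7), (9,11,8)}"
  proof -
    let ?S = "a+b+c"
    have hs: "0 \<le> ?S - 3*a" "?S - 3*a \<le> 1" "0 \<le> 2*?S - 5*b" "2*?S - 5*b \<le> 1"
      "0 \<le> 2*?S - 7*c" "2*?S - 7*c \<le> 1"
      using h unfolding t A3_def A2_def A1_def A0_def comm_def sl1_def sl2_def sl3_def by auto
    have c1: "?S - 3*a = 0 \<or> ?S - 3*a = 1" using hs by linarith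
    have c2: "2*?S - 5*b = 0 \<or> 2*?S - 5*b = 1" using hs by linarith
    have c3: "2*?S - 7*c = 0 \<or> 2*?S - 7*c = 1" using hs by linarith
    have k: "2*(a+b+c) = 35*(?S - 3*a) + 21*(2*?S - 5*b) + 15*(2*?S - 7*c)" by (simp add: algebra_simps)
    from c1 c2 c3 show ?thesis
    proof (elim disjE)
      assume h1: "?S - 3*a = 0" and h2: "2*?S - 5*b = 0" and h3: "2*?S - 7*c = 0"
      have n: "2*(a+b+c) = 0" using k unfolding h1 h2 h3 by simp
      have "a = 0" "b = 0" "c = 0" using n h1 h2 h3 by linarith+
      then show ?thesis by simp
    next
      assume h1: "?S - 3*a = 0" and h2: "2*?S - 5*b = 0" and h3: "2*?S - 7*c = 1"
      have n: "2*(a+b+c) = 15" using k unfolding h1 h2 h3 by simp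
      then have False by presburger
      then show ?thesis ..
    next
      assume h1: "?S - 3*a = 0" and h2: "2*?S - 5*b = 1" and h3: "2*?S - 7*c = 0"
      have n: "2*(a+b+c) = 21" using k unfolding h1 h2 h3 by simp
      then have False by presburger
      then show ?thesis ..
    next
      assume h1: "?S - 3*a = 0" and h2: "2*?S - 5*b = 1" and h3: "2*?S - 7*c = 1"
      have n: "2*(a+b+c) = 36" using k unfolding h1 h2 h3 by simp
      have "a = 6" "b = 7" "c = 5" using n h1 h2 h3 by linarith+
      then show ?thesis by simp
    next
      assume h1: "?S - 3*a = 1" and h2: "2*?S - 5*b = 0" and h3: "2*?S - 7*c = 0"
      have n: "2*(a+b+c) = 35" using k unfolding h1 h2 h3 by simp
      then have False by presburger
      then show ?thesis ..
    next
      assume h1: "?S - 3*a = 1" and h2: "2*?S - 5*b = 0" and h3: "2*?S - 7*c = 1"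
      have n: "2*(a+b+c) = 50" using k unfolding h1 h2 h3 by simp
      have "a = 8" "b = 10" "c = 7" using n h1 h2 h3 by linarith+
      then show ?thesis by simp
    next
      assume h1: "?S - 3*a = 1" and h2: "2*?S - 5*b = 1" and h3: "2*?S - 7*c = 0"
      have n: "2*(a+b+c) = 56" using k unfolding h1 h2 h3 by simp
      have "a = 9" "b = 11" "c = 8" using n h1 h2 h3 by linarith+
      then show ?thesis by simp
    next
      assume h1: "?S - 3*a = 1" and h2: "2*?S - 5*b = 1" and h3: "2*?S - 7*c = 1"
      have n: "2*(a+b+c) = 71" using k unfolding h1 h2 h3 by simp
      then have False by presburger
      then show ?thesis ..
    qed
  qed
  then show "t \<in> {t \<in> {(0,0,0), (6,7,5), (8,10,7), (9,11,8)}. tsum t = g}"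
    using h by (simp add: t A3_def A2_def A1_def A0_def)
next
  fix t assume "t \<in> {t \<in> {(0,0,0), (6,7,5), (8,10,7), (9,11,8)}. tsum t = g}"
  then have m: "t = (0,0,0) \<or> t = (6,7,5) \<or> t = (8,10,7) \<or> t = (9,11,8)" and g: "tsum t = g" by auto
  have mem: "comm t \<and> sl1 t \<le> 1 \<and> sl2 t \<le> 1 \<and> sl3 t \<le> 1"
    using m b1 b2 b3 b4 by (elim disjE; simp only:)
  show "t \<in> A3 g" using mem g unfolding A3_mem by simp
qed

definition c0 :: "nat \<Rightarrow> rat" where "c0 n = of_nat (card (A0 (int n)))"
definition c1 :: "nat \<Rightarrow> rat" where "c1 n = of_nat (card (A1 (int n)))"
definition c2 :: "nat \<Rightarrow> rat" where "c2 n = of_nat (card (A2 (int n)))"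
definition c3 :: "nat \<Rightarrow> rat" where "c3 n = of_nat (card (A3 (int n)))"

lemma A1_neg: "g < 0 \<Longrightarrow> A1 g = {}" by (simp add: A1_def A0_neg)
lemma A2_neg: "g < 0 \<Longrightarrow> A2 g = {}" by (simp add: A2_def A1_neg)

lemma fps1: "Abs_fps c0 * (1 - fps_X^15) = Abs_fps c1"
proof (rule fps_ext)
  fix n
  have e: "Abs_fps c0 * (1 - fps_X^15) = Abs_fps c0 - fps_X^15 * Abs_fps c0" by (simp add: algebra_simps)
  show "fps_nth (Abs_fps c0 * (1 - fps_X^15)) n = fps_nth (Abs_fps c1) n"
  proof (cases "n < 15")
    case True
    then show ?thesis using rec1[of "int n"] A0_neg[of "int n - 15"]
      by (simp add: e fps_X_power_mult_nth c0_def c1_def)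
  next
    case False
    then have "int n - 15 = int (n - 15)" by simp
    then show ?thesis using rec1[of "int n"] False
      by (simp add: e fps_X_power_mult_nth c0_def c1_def)
  qed
qed

lemma fps2: "Abs_fps c1 * (1 - fps_X^21) = Abs_fps c2"
proof (rule fps_ext)
  fix n
  have e: "Abs_fps c1 * (1 - fps_X^21) = Abs_fps c1 - fps_X^21 * Abs_fps c1" by (simp add: algebra_simps)
  show "fps_nth (Abs_fps c1 * (1 - fps_X^21)) n = fps_nth (Abs_fps c2) n"
  proof (cases "n < 21")
    case True
    then show ?thesis using rec2[of "int n"] A1_neg[of "int n - 21"]
      by (simp add: e fps_X_power_mult_nth c1_def c2_def)
  next
    case False
    then have "int n - 21 = int (n - 21)" by simp
    then show ?thesis using rec2[of "int n"] False
      by (simp add: e fps_X_power_mult_nth c1_def c2_def)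
  qed
qed

lemma fps3: "Abs_fps c2 * (1 - fps_X^35) = Abs_fps c3"
proof (rule fps_ext)
  fix n
  have e: "Abs_fps c2 * (1 - fps_X^35) = Abs_fps c2 - fps_X^35 * Abs_fps c2" by (simp add: algebra_simps)
  show "fps_nth (Abs_fps c2 * (1 - fps_X^35)) n = fps_nth (Abs_fps c3) n"
  proof (cases "n < 35")
    case True
    then show ?thesis using rec3[of "int n"] A2_neg[of "int n - 35"]
      by (simp add: e fps_X_power_mult_nth c2_def c3_def)
  next
    case False
    then have "int n - 35 = int (n - 35)" by simp
    then show ?thesis using rec3[of "int n"] False
      by (simp add: e fps_X_power_mult_nth c2_def c3_def)
  qed
qed

lemma fps4: "Abs_fps c3 = (1 + fps_X ^ 18 + fps_X ^ 25 + fps_X ^ 28 :: rat fps)"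
proof (rule fps_ext)
  fix n
  have "A3 (int n) = (if n = 0 then {(0,0,0)} else if n = 18 then {(6,7,5)} else if n = 25 then {(8,10,7)}
     else if n = 28 then {(9,11,8)} else {})"
    unfolding A3_char by (simp add: tsum_def; intro conjI impI; auto)
  then show "fps_nth (Abs_fps c3) n = fps_nth (1 + fps_X ^ 18 + fps_X ^ 25 + fps_X ^ 28 :: rat fps) n"
    by (simp add: c3_def)
qed

lemma oddpos: "odd (z::int) \<Longrightarrow> 0 \<le> z \<Longrightarrow> 0 < z"
  by (cases "z = 0") auto

lemma decomp:
  assumes "comm t"
  shows "\<exists>b\<in>{(0,0,0), (6,7,5), (8,10,7), (9,11,8)}. \<exists>n1 n2 n3 :: nat.
               t = tadd b (tadd (tscale n1 (5,6,4)) (tadd (tscale n2 (7,8,6)) (tscale n3 (11,14,10))))"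
proof -
  obtain a b c where t: "t = (a,b,c)" by (cases t)
  define x where "x = (a+b+c) - 3*a"
  define y where "y = 2*(a+b+c) - 5*b"
  define z where "z = 2*(a+b+c) - 7*c"
  have nn: "x \<ge> 0" "y \<ge> 0" "z \<ge> 0" using assms by (auto simp: t comm_def x_def y_def z_def)
  have "x + y + z = 2*(a-c)" unfolding x_def y_def z_def by simp
  then have "even (x + y + z)" by simp
  then have par: "even x = (even y = even z)" by auto
  have key: "\<exists>n1 n2 n3::nat. z - s3 = 2*int n1 \<and> y - s2 = 2*int n2 \<and> x - s1 = 2*int n3"
    if h: "z - s3 \<ge> 0" "y - s2 \<ge> 0" "x - s1 \<ge> 0" "even (z - s3)" "even (y - s2)" "even (x - s1)"
    for s1 s2 s3 :: int
  proof -
    obtain k1 where k1: "z - s3 = 2*k1" using h(4) by (rule evenE)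
    obtain k2 where k2: "y - s2 = 2*k2" using h(5) by (rule evenE)
    obtain k3 where k3: "x - s1 = 2*k3" using h(6) by (rule evenE)
    have "k1 \<ge> 0" "k2 \<ge> 0" "k3 \<ge> 0" using k1 k2 k3 h(1-3) by linarith+
    then have "z - s3 = 2*int (nat k1) \<and> y - s2 = 2*int (nat k2) \<and> x - s1 = 2*int (nat k3)"
      using k1 k2 k3 by simp
    then show ?thesis by blast
  qed
  have fin: "t = tadd (p,q,r) (tadd (tscale n1 (5,6,4)) (tadd (tscale n2 (7,8,6)) (tscale n3 (11,14,10))))"
    if "z - s3 = 2*int n1" "y - s2 = 2*int n2" "x - s1 = 2*int n3"
       "s1 = (p+q+r) - 3*p" "s2 = 2*(p+q+r) - 5*q" "s3 = 2*(p+q+r) - 7*r"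
    for p q r s1 s2 s3 n1 n2 n3
  proof -
    have "a = p + int n1 * 5 + int n2 * 7 + int n3 * 11 \<and>
         b = q + int n1 * 6 + int n2 * 8 + int n3 * 14 \<and>
         c = r + int n1 * 4 + int n2 * 6 + int n3 * 10"
      using that unfolding x_def y_def z_def by (simp add: algebra_simps)
    then show ?thesis by (simp add: t tadd_def tscale_def)
  qed
  consider (A) "even y" "even z" | (B) "odd y" "odd z" | (C) "even y" "odd z" | (D) "odd y" "even z" by blast
  then show ?thesis
  proof cases
    case A
    obtain n1 n2 n3 where "z - 0 = 2*int n1" "y - 0 = 2*int n2" "x - 0 = 2*int n3"
      using key[of 0 0 0] A nn par by auto
    from fin[OF this, of 0 0 0] show ?thesis by fastforce
  next
    case B
    have e: "even (z - 1)" "even (y - 1)" "even (x - 0)" "z - 1 \<ge> 0" "y - 1 \<ge> 0" using B nn par by (auto intro: oddpos)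
    obtain n1 n2 n3 where "z - 1 = 2*int n1" "y - 1 = 2*int n2" "x - 0 = 2*int n3"
      using key[of 1 1 0] e nn by auto
    from fin[OF this, of 6 7 5] show ?thesis by fastforce
  next
    case C
    have e: "even (z - 1)" "even (y - 0)" "even (x - 1)" "z - 1 \<ge> 0" "x - 1 \<ge> 0" using C nn par by (auto intro: oddpos)
    obtain n1 n2 n3 where "z - 1 = 2*int n1" "y - 0 = 2*int n2" "x - 1 = 2*int n3"
      using key[of 1 0 1] e nn by auto
    from fin[OF this, of 8 10 7] show ?thesis by fastforce
  next
    case D
    have e: "even (z - 0)" "even (y - 1)" "even (x - 1)" "y - 1 \<ge> 0" "x - 1 \<ge> 0" using D nn par by (auto intro: oddpos)
    obtain n1 n2 n3 where "z - 0 = 2*int n1" "y - 1 = 2*int n2" "x - 1 = 2*int n3"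
      using key[of 0 1 1] e nn by auto
    from fin[OF this, of 9 11 8] show ?thesis by fastforce
  qed
qed

lemma set100: "A0 100 = {(32,40,28), (33,39,28), (33,40,27)}"
proof (intro set_eqI iffI)
  fix t assume h: "t \<in> A0 100"
  obtain a b c where t: "t = (a,b,c)" by (cases t)
  have "a \<le> 33" "b \<le> 40" "c \<le> 28" "a+b+c = 100" using h by (auto simp: t A0_def comm_def tsum_def)
  then have "(a = 32 \<and> b = 40 \<and> c = 28) \<or> (a = 33 \<and> b = 39 \<and> c = 28) \<or> (a = 33 \<and> b = 40 \<and> c = 27)"
  proof -
    assume h: "a \<le> 33" "b \<le> 40" "c \<le> 28" "a+b+c = 100"
    show ?thesis
    proof (cases "a = 33")
      case True
      show ?thesis
      proof (cases "b = 40")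
        case True
        then show ?thesis using h \<open>a = 33\<close> by simp
      next
        case False
        then have "b = 39" "c = 28" using h \<open>a = 33\<close> by linarith+
        then show ?thesis using \<open>a = 33\<close> by simp
      qed
    next
      case False
      then have "a = 32" "b = 40" "c = 28" using h by linarith+
      then show ?thesis by simp
    qed
  qed
  then show "t \<in> {(32,40,28), (33,39,28), (33,40,27)}" by (auto simp: t)
qed (auto simp: A0_def comm_def tsum_def)

lemma set101: "A0 101 = {(33,40,28)}"
proof (intro set_eqI iffI)
  fix t assume h: "t \<in> A0 101"
  obtain a b c where t: "t = (a,b,c)" by (cases t)
  have "a \<le> 33" "b \<le> 40" "c \<le> 28" "a+b+c = 101" using h by (auto simp: t A0_def comm_def tsum_def)
  then have "a = 33 \<and> b = 40 \<and> c = 28" by linarith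
  then show "t \<in> {(33,40,28)}" by (auto simp: t)
qed (auto simp: A0_def comm_def tsum_def)

theorem mainTheorem12:
  fixes \<alpha> :: "rat \<times> rat \<times> rat"
  assumes "\<alpha> = (1/3, 2/5, 2/7)"
  shows "(\<forall>t. communal \<alpha> t \<longrightarrow>
            (\<exists>b\<in>{(0,0,0), (6,7,5), (8,10,7), (9,11,8)}. \<exists>n1 n2 n3 :: nat.
               t = tadd b (tadd (tscale n1 (5,6,4)) (tadd (tscale n2 (7,8,6)) (tscale n3 (11,14,10))))))
       \<and> Abs_fps (\<lambda>g. of_nat (fcount \<alpha> g) :: rat)
           = (1 + fps_X ^ 18 + fps_X ^ 25 + fps_X ^ 28)
             / ((1 - fps_X ^ 15) * (1 - fps_X ^ 21) * (1 - fps_X ^ 35))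
       \<and> fcount \<alpha> 100 = 3
       \<and> communal_set \<alpha> 100 = {(32,40,28), (33,39,28), (33,40,27)}
       \<and> fcount \<alpha> 101 = 1
       \<and> communal_set \<alpha> 101 = {(33,40,28)}"
proof -
  have cs: "communal_set \<alpha> g = A0 (int g)" for g
    unfolding communal_set_def A0_def assms communal_iff ..
  have F: "Abs_fps (\<lambda>g. of_nat (fcount \<alpha> g) :: rat) = Abs_fps c0"
    by (simp add: fcount_def cs c0_def[abs_def])
  define D :: "rat fps" where "D = (1 - fps_X ^ 15) * (1 - fps_X ^ 21) * (1 - fps_X ^ 35)"
  have FD: "Abs_fps c0 * D = 1 + fps_X ^ 18 + fps_X ^ 25 + fps_X ^ 28"
    unfolding D_def mult.assoc[symmetric] fps1 fps2 fps3 fps4 ..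
  have D0: "fps_nth D 0 \<noteq> 0" unfolding D_def by simp
  have "(1 + fps_X ^ 18 + fps_X ^ 25 + fps_X ^ 28) / D = Abs_fps c0"
    unfolding fps_divide_unit[OF D0] FD[symmetric] mult.assoc inverse_mult_eq_1'[OF D0] by simp
  then have G: "Abs_fps (\<lambda>g. of_nat (fcount \<alpha> g) :: rat)
           = (1 + fps_X ^ 18 + fps_X ^ 25 + fps_X ^ 28)
             / ((1 - fps_X ^ 15) * (1 - fps_X ^ 21) * (1 - fps_X ^ 35))"
    unfolding F D_def by simp
  have P1: "\<forall>t. communal \<alpha> t \<longrightarrow>
            (\<exists>b\<in>{(0,0,0), (6,7,5), (8,10,7), (9,11,8)}. \<exists>n1 n2 n3 :: nat.
               t = tadd b (tadd (tscale n1 (5,6,4)) (tadd (tscale n2 (7,8,6)) (tscale n3 (11,14,10)))))"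
    using decomp by (simp add: assms communal_iff)
  have s100: "communal_set \<alpha> 100 = {(32,40,28), (33,39,28), (33,40,27)}"
    using cs[of 100] set100 by simp
  have s101: "communal_set \<alpha> 101 = {(33,40,28)}"
    using cs[of 101] set101 by simp
  show ?thesis using P1 G s100 s101 by (simp add: fcount_def)
qed

end
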